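(* Let $E$ be a real Banach space, $K\subset E$ nonempty closed convex, $Y$ a real Banach space containing a closed, convex, pointed cone $C$ with nonempty interior, $f:E\times E\to Y$, $T:K\to\mathcal P(K)$, and $g\in\mathcal F$ satisfying H1–H4, with B1–B4 holding. For Algorithm SEML, at any iteration $k$ at which $v^k$ is defined and the algorithm does not stop: (i) $\ell(k)$ is well defined (the Armijo-type search for $\alpha_k$ terminates after finitely many steps), and consequently $y^k$ is well defined; (ii) if $x^k\neq z^k$, then $f(y^k,x^k)\notin-C$.
   Context: $C^+=\{z\in Y^*:\langle y,z\rangle\ge0\ \forall y\in C\}$; $y\preceq y'$ iff $y'-y\in C$; $C$-convex: $G(tx+(1-t)y)\preceq tG(x)+(1-t)G(y)$. $\mathcal F$: functions $g:E\to\mathbb R$ strictly convex, lower semicontinuous, Gâteaux differentiable with derivative $g'$. $D_g(x,y)=g(x)-g(y)-\langle x-y,g'(y)\rangle$; $v_g(x,t)=\inf\{D_g(y,x):\|y-x\|=t\}$. H1: level sets of $D_g(x,\cdot)$ bounded; H2: $\inf_{x\in A}v_g(x,t)>0$ for $t>0$, bounded $A$; H3: $g'$ uniformly continuous on bounded sets; H4: $\lim_{\|x\|\to\infty}(g(x)-\rho\|x-z\|)=\infty$ for all $z$, $\rho>0$. $\Pi^g_D(x)$: unique minimizer of $D_g(\cdot,x)$ over nonempty closed convex $D$. B1: $f(x,x)=0$. B2: $f$ uniformly continuous on bounded subsets of $E\times E$. B3: $f(x,\cdot)$ $C$-convex. B4: $T$ has nonempty closed convex values, is demiclosed ($x^k\rightharpoonup\bar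 x$, $d(x^k,T(x^k))\to0\Rightarrow\bar x\in T(\bar x)$), lower semicontinuous at each $\bar x\in K$ ($x^k\to\bar x$, $\bar y\in T(\bar x)\Rightarrow\exists y^k\in T(x^k)$, $y^k\to\bar y$), quasi $D_g$-nonexpansive ($S(x)=\Pi^g_{T(x)}(x)$ has a fixed point and $D_g(p,S(x))\le D_g(p,x)$ for all fixed points $p$ of $S$ and $x\in K$). $\mathrm{argmin}^C_w\{G(y):y\in Q\}$: $a\in Q$ with no $y\in Q$ such that $G(a)-G(y)\in\mathrm{int}(C)$. Algorithm SEML: parameters $v^0\in K$, $\delta,\theta\in(0,1)$, $\{\beta_k\}\subset[\hat\beta,\tilde\beta]$ with $0<\hat\beta\le\tilde\beta$, $\{\gamma_k\}\subset[\varepsilon,1]$, $\varepsilon\in(0,1]$, $\{e^k\}\subset\mathrm{int}(C)$, $e^k\to\bar e\in\mathrm{int}(C)$. Given $v^k$: $x^k=\Pi^g_{T(v^k)}(v^k)$; $z^k\in\mathrm{argmin}^C_w\{\beta_kf(x^k,y)+g(y)e^k-\langle y,g'(x^k)\rangle e^k:y\in T(v^k)\}$; stop if $z^k=v^k$; else $\ell(k)=\min\{\ell\ge0:-\beta_kf(y^\ell,x^k)+\beta_kf(y^\ell,z^k)+\delta D_g(z^k,x^k)e^k\notin\mathrm{int}(C)\}$, $y^\ell=\theta^\ell z^k+(1-\theta^\ell)x^k$; $\alpha_k=\theta^{\ell(k)}$; $y^k=\alpha_kz^k+(1-\alpha_k)x^k$; $H_k=\{y:f(y^k,y)\in-C\}$;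 $K_0=K\cap H_0$, $K_k=K_{k-1}\cap H_k$; $w^k=\Pi^g_{K_k}(x^k)$; $v^{k+1}=\Pi^g_{L_k\cap M_k\cap N_k}(v^0)$ with $L_k=\{z:\langle z-x^k,g'(x^k)-g'(w^k)\rangle\le-\gamma_kD_g(x^k,w^k)\}$, $M_k=\{z:\langle z-v^k,g'(v^k)-g'(x^k)\rangle\le-\gamma_kD_g(v^k,x^k)\}$, $N_k=\{z:\langle z-v^k,g'(v^0)-g'(v^k)\rangle\le0\}$. *)

theory Defs
  imports "HOL-Analysis.Analysis"
begin

text \<open>Dual pairing: elements of the dual space E* are bounded linear functionals
  of type 'e \<Rightarrow>L real; the pairing of y with phi is phi applied to y.\<close>

definition strictly_convex :: "('e::real_vector \<Rightarrow> real) \<Rightarrow> bool" where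
  "strictly_convex g \<longleftrightarrow>
     (\<forall>x y t. x \<noteq> y \<and> 0 < t \<and> t < 1 \<longrightarrow>
        g (t *\<^sub>R x + (1 - t) *\<^sub>R y) < t * g x + (1 - t) * g y)"

definition lsc :: "('e::topological_space \<Rightarrow> real) \<Rightarrow> bool" where
  "lsc g \<longleftrightarrow> (\<forall>x. \<forall>e>0. \<forall>\<^sub>F y in at x. g x - e < g y)"

definition gateaux_deriv :: "('e::real_normed_vector \<Rightarrow> real) \<Rightarrow> ('e \<Rightarrow> ('e \<Rightarrow>\<^sub>L real)) \<Rightarrow> bool" where
  "gateaux_deriv g g' \<longleftrightarrow>
     (\<forall>x h. ((\<lambda>t. (g (x + t *\<^sub>R h) - g x) / t) \<longlongrightarrow> blinfun_apply (g' x) h) (at 0))"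

definition bregman :: "('e::real_normed_vector \<Rightarrow> real) \<Rightarrow> ('e \<Rightarrow> ('e \<Rightarrow>\<^sub>L real)) \<Rightarrow> 'e \<Rightarrow> 'e \<Rightarrow> real" where
  "bregman g g' x y = g x - g y - blinfun_apply (g' y) (x - y)"

definition in_F :: "('e::real_normed_vector \<Rightarrow> real) \<Rightarrow> ('e \<Rightarrow> ('e \<Rightarrow>\<^sub>L real)) \<Rightarrow> bool" where
  "in_F g g' \<longleftrightarrow> strictly_convex g \<and> lsc g \<and> gateaux_deriv g g'"

definition H1 :: "('e::real_normed_vector \<Rightarrow> real) \<Rightarrow> ('e \<Rightarrow> ('e \<Rightarrow>\<^sub>L real)) \<Rightarrow> bool" where
  "H1 g g' \<longleftrightarrow> (\<forall>x r. bounded {y. bregman g g' x y \<le> r})"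

text \<open>H2: inf over x in A of v_g(x,t) > 0, where v_g(x,t) = inf {D_g(y,x) : norm(y-x)=t};
  written out as existence of a positive uniform lower bound (inf of empty set = +infinity).\<close>
definition H2 :: "('e::real_normed_vector \<Rightarrow> real) \<Rightarrow> ('e \<Rightarrow> ('e \<Rightarrow>\<^sub>L real)) \<Rightarrow> bool" where
  "H2 g g' \<longleftrightarrow> (\<forall>A t. bounded A \<and> 0 < t \<longrightarrow>
      (\<exists>c>0. \<forall>x\<in>A. \<forall>y. norm (y - x) = t \<longrightarrow> c \<le> bregman g g' y x))"

definition H3 :: "('e::real_normed_vector \<Rightarrow> real) \<Rightarrow> ('e \<Rightarrow> ('e \<Rightarrow>\<^sub>L real)) \<Rightarrow> bool" where
  "H3 g g' \<longleftrightarrow> (\<forall>A. bounded A \<longrightarrow> uniformly_continuous_on A g')"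

definition H4 :: "('e::real_normed_vector \<Rightarrow> real) \<Rightarrow> bool" where
  "H4 g \<longleftrightarrow> (\<forall>z. \<forall>\<rho>>0. filterlim (\<lambda>x. g x - \<rho> * norm (x - z)) at_top at_infinity)"

definition bproj :: "('e::real_normed_vector \<Rightarrow> real) \<Rightarrow> ('e \<Rightarrow> ('e \<Rightarrow>\<^sub>L real)) \<Rightarrow> 'e set \<Rightarrow> 'e \<Rightarrow> 'e" where
  "bproj g g' D x = (THE y. y \<in> D \<and> (\<forall>u\<in>D. bregman g g' y x \<le> bregman g g' u x))"

definition C_convex :: "'y::real_vector set \<Rightarrow> ('e::real_vector \<Rightarrow> 'y) \<Rightarrow> bool" where
  "C_convex C G \<longleftrightarrow> (\<forall>x y t. 0 \<le> t \<and> t \<le> 1 \<longrightarrow>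
      t *\<^sub>R G x + (1 - t) *\<^sub>R G y - G (t *\<^sub>R x + (1 - t) *\<^sub>R y) \<in> C)"

definition wargmin :: "'y::real_normed_vector set \<Rightarrow> ('e \<Rightarrow> 'y) \<Rightarrow> 'e set \<Rightarrow> 'e set" where
  "wargmin C G Q = {a\<in>Q. \<not> (\<exists>y\<in>Q. G a - G y \<in> interior C)}"

definition weak_conv :: "(nat \<Rightarrow> 'e::real_normed_vector) \<Rightarrow> 'e \<Rightarrow> bool" where
  "weak_conv xs x \<longleftrightarrow> (\<forall>\<phi> :: 'e \<Rightarrow>\<^sub>L real. (\<lambda>k. blinfun_apply \<phi> (xs k)) \<longlonglongrightarrow> blinfun_apply \<phi> x)"

definition B1 :: "('e \<Rightarrow> 'e \<Rightarrow> 'y::zero) \<Rightarrow> bool" where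
  "B1 f \<longleftrightarrow> (\<forall>x. f x x = 0)"

definition B2 :: "('e::real_normed_vector \<Rightarrow> 'e \<Rightarrow> 'y::real_normed_vector) \<Rightarrow> bool" where
  "B2 f \<longleftrightarrow> (\<forall>S :: ('e \<times> 'e) set. bounded S \<longrightarrow> uniformly_continuous_on S (\<lambda>(x, y). f x y))"

definition B3 :: "'y::real_vector set \<Rightarrow> ('e::real_vector \<Rightarrow> 'e \<Rightarrow> 'y) \<Rightarrow> bool" where
  "B3 C f \<longleftrightarrow> (\<forall>x. C_convex C (f x))"

definition B4 :: "('e::real_normed_vector \<Rightarrow> real) \<Rightarrow> ('e \<Rightarrow> ('e \<Rightarrow>\<^sub>L real)) \<Rightarrow> 'e set \<Rightarrow> ('e \<Rightarrow> 'e set) \<Rightarrow> bool" where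
  "B4 g g' K T \<longleftrightarrow>
     (\<forall>x\<in>K. T x \<noteq> {} \<and> closed (T x) \<and> convex (T x)) \<and>
     (\<forall>xs xb. (\<forall>k. xs k \<in> K) \<and> weak_conv xs xb \<and> (\<lambda>k. infdist (xs k) (T (xs k))) \<longlonglongrightarrow> 0
         \<longrightarrow> xb \<in> T xb) \<and>
     (\<forall>xs xb yb. xb \<in> K \<and> (\<forall>k. xs k \<in> K) \<and> xs \<longlonglongrightarrow> xb \<and> yb \<in> T xb
         \<longrightarrow> (\<exists>ys. (\<forall>k. ys k \<in> T (xs k)) \<and> ys \<longlonglongrightarrow> yb)) \<and>
     (let S = (\<lambda>x. bproj g g' (T x) x) in
        (\<exists>p\<in>K. S p = p) \<and>
        (\<forall>p\<in>K. S p = p \<longrightarrow> (\<forall>x\<in>K. bregman g g' p (S x) \<le> bregman g g' p x)))"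

end

theory Submission
  imports Defs
begin

lemma sc_convex:
  assumes "strictly_convex g" "0 \<le> t" "t \<le> 1"
  shows "g (t *\<^sub>R x + (1 - t) *\<^sub>R y) \<le> t * g x + (1 - t) * g y"
proof (cases "x = y \<or> t = 0 \<or> t = 1")
  case True
  then show ?thesis
  proof (elim disjE)
    assume "x = y" then show ?thesis by (simp add: algebra_simps flip: scaleR_add_left)
  qed auto
next
  case False
  then have "x \<noteq> y" "0 < t" "t < 1" using assms by auto
  then show ?thesis using assms(1) unfolding strictly_convex_def
    by (simp add: less_imp_le)
qed

lemma breg_self: "bregman g g' x x = 0"
  by (simp add: bregman_def blinfun.zero_right)

lemma breg_pos:
  assumes sc: "strictly_convex g" and gd: "gateaux_deriv g g'" and ne: "x \<noteq> y"
  shows "0 < bregman g g' y x"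
proof -
  define m where "m = x + (1/2) *\<^sub>R (y - x)"
  have lim0: "((\<lambda>t. (g (x + t *\<^sub>R (y - x)) - g x) / t) \<longlongrightarrow> blinfun_apply (g' x) (y - x)) (at 0)"
    using gd unfolding gateaux_deriv_def by blast
  have lim: "((\<lambda>t. (g (x + t *\<^sub>R (y - x)) - g x) / t) \<longlongrightarrow> blinfun_apply (g' x) (y - x)) (at_right 0)"
    by (rule tendsto_mono[OF at_le[OF subset_UNIV] lim0])
  have bnd: "(g (x + t *\<^sub>R (y - x)) - g x) / t \<le> 2 * (g m - g x)" if t: "0 < t" "t < 1/2" for t
  proof -
    have eq: "x + t *\<^sub>R (y - x) = (2*t) *\<^sub>R m + (1 - 2*t) *\<^sub>R x"
      by (simp add: m_def algebra_simps)
    have "g (x + t *\<^sub>R (y - x)) \<le> (2*t) * g m + (1 - 2*t) * g x"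
      unfolding eq by (rule sc_convex[OF sc]) (use t in auto)
    then have "g (x + t *\<^sub>R (y - x)) - g x \<le> t * (2 * (g m - g x))" by (simp add: algebra_simps)
    then show ?thesis using t by (simp add: divide_le_eq mult.commute)
  qed
  have "blinfun_apply (g' x) (y - x) \<le> 2 * (g m - g x)"
  proof (rule tendsto_upperbound[OF lim])
    show "\<forall>\<^sub>F t in at_right 0. (g (x + t *\<^sub>R (y - x)) - g x) / t \<le> 2 * (g m - g x)"
      unfolding eventually_at_right_field by (rule exI[of _ "1/2"]) (use bnd in simp)
  qed simp
  moreover have "g m < (1/2) * g y + (1 - 1/2) * g x"
  proof -
    have "m = (1/2) *\<^sub>R y + (1 - 1/2) *\<^sub>R x" by (simp add: m_def algebra_simps flip: scaleR_add_left)
    moreover have "g ((1/2) *\<^sub>R y + (1 - 1/2) *\<^sub>R x) < (1/2) * g y + (1 - 1/2) * g x"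
    proof -
      have "y \<noteq> x \<and> 0 < (1/2::real) \<and> (1/2::real) < 1" using ne by auto
      then show ?thesis using sc unfolding strictly_convex_def by blast
    qed
    ultimately show ?thesis by simp
  qed
  ultimately show ?thesis by (simp add: bregman_def)
qed

lemma breg_nonneg:
  assumes "strictly_convex g" "gateaux_deriv g g'"
  shows "0 \<le> bregman g g' y x"
  using breg_pos[OF assms, of x y] breg_self[of g g' x] by (cases "x = y") auto

lemma breg_ray:
  assumes sc: "strictly_convex g" and gd: "gateaux_deriv g g'" and s: "1 \<le> s"
  shows "bregman g g' (m + d) m \<le> bregman g g' (m + s *\<^sub>R d) m"
proof -
  have eq: "m + d = (1/s) *\<^sub>R (m + s *\<^sub>R d) + (1 - 1/s) *\<^sub>R m"
    using s by (simp add: algebra_simps)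
  have cv: "g (m + d) \<le> (1/s) * g (m + s *\<^sub>R d) + (1 - 1/s) * g m"
    unfolding eq by (rule sc_convex[OF sc]) (use s in auto)
  have lin: "blinfun_apply (g' m) (s *\<^sub>R d) = s * blinfun_apply (g' m) d"
    by (simp add: blinfun.scaleR_right)
  have "bregman g g' (m + d) m \<le> (1/s) * bregman g g' (m + s *\<^sub>R d) m"
    using cv s unfolding bregman_def by (simp add: lin algebra_simps)
  also have "\<dots> \<le> bregman g g' (m + s *\<^sub>R d) m"
    using breg_nonneg[OF sc gd, of "m + s *\<^sub>R d" m] s
    by (simp add: divide_le_eq mult_left_mono[of 1 s, simplified])
  finally show ?thesis .
qed

lemma H2_ge:
  assumes sc: "strictly_convex g" and gd: "gateaux_deriv g g'" and h2: "H2 g g'"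
    and A: "bounded A" and t: "0 < t"
  shows "\<exists>c>0. \<forall>m\<in>A. \<forall>y. t \<le> norm (y - m) \<longrightarrow> c \<le> bregman g g' y m"
proof -
  have "\<exists>c>0. \<forall>x\<in>A. \<forall>y. norm (y - x) = t \<longrightarrow> c \<le> bregman g g' y x"
    using h2[unfolded H2_def, rule_format, OF conjI[OF A t]] .
  then obtain c where c: "c > 0" "\<And>m y. m \<in> A \<Longrightarrow> norm (y - m) = t \<Longrightarrow> c \<le> bregman g g' y m"
    by blast
  have "c \<le> bregman g g' y m" if m: "m \<in> A" and ty: "t \<le> norm (y - m)" for m y
  proof -
    define r where "r = norm (y - m)"
    have r: "0 < r" unfolding r_def using ty t by linarith
    define d where "d = (t / r) *\<^sub>R (y - m)"
    have nd: "norm (m + d - m) = t" using r t by (simp add: d_def r_def)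
    have ys: "m + (r / t) *\<^sub>R d = y" using r t by (simp add: d_def)
    have "c \<le> bregman g g' (m + d) m" using c(2)[OF m nd] .
    also have "\<dots> \<le> bregman g g' (m + (r / t) *\<^sub>R d) m"
      by (rule breg_ray[OF sc gd]) (use ty t r_def in simp)
    finally show ?thesis using ys by simp
  qed
  then show ?thesis using c(1) by blast
qed

lemma breg_mid:
  "bregman g g' y v + bregman g g' w v - 2 * bregman g g' ((1/2) *\<^sub>R (y + w)) v
   = bregman g g' y ((1/2) *\<^sub>R (y + w)) + bregman g g' w ((1/2) *\<^sub>R (y + w))"
proof -
  define m where "m = (1/2) *\<^sub>R (y + w)"
  have a: "blinfun_apply L (y - v) + blinfun_apply L (w - v) - 2 * blinfun_apply L (m - v) = 0" for L :: "'a \<Rightarrow>\<^sub>L real"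
  proof -
    have "y - v + (w - v) - 2 *\<^sub>R (m - v) = 0" by (simp add: m_def algebra_simps scaleR_2)
    then have "blinfun_apply L (y - v + (w - v) - 2 *\<^sub>R (m - v)) = 0" by simp
    then show ?thesis by (simp only: blinfun.diff_right blinfun.add_right blinfun.scaleR_right) simp
  qed
  have b: "blinfun_apply L (y - m) + blinfun_apply L (w - m) = 0" for L :: "'a \<Rightarrow>\<^sub>L real"
  proof -
    have "y - m + (w - m) = 0" by (simp add: m_def algebra_simps flip: scaleR_add_left)
    then have "blinfun_apply L (y - m + (w - m)) = 0" by simp
    then show ?thesis by (simp only: blinfun.add_right)
  qed
  show ?thesis using a[of "g' v"] b[of "g' m"] unfolding bregman_def m_def[symmetric] by (simp only: left_diff_distrib right_diff_distrib)
qed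

lemma halfhalf: "(1/2) *\<^sub>R a + (1/2) *\<^sub>R a = (a::'a::real_vector)"
  by (simp flip: scaleR_add_left)

lemma bproj_in:
  fixes g :: "'e::banach \<Rightarrow> real"
  assumes sc: "strictly_convex g" and gd: "gateaux_deriv g g'" and ls: "lsc g"
    and h2: "H2 g g'" and h4: "H4 g"
    and Q: "Q \<noteq> {}" "closed Q" "convex Q"
  shows "bproj g g' Q v \<in> Q"
proof -
  define \<phi> where "\<phi> u = bregman g g' u v" for u
  define \<mu> where "\<mu> = Inf (\<phi> ` Q)"
  have bdd: "bdd_below (\<phi> ` Q)"
    using breg_nonneg[OF sc gd] unfolding \<phi>_def bdd_below_def by blast
  have muQ: "\<mu> \<le> \<phi> u" if "u \<in> Q" for u
    unfolding \<mu>_def using bdd that by (simp add: cInf_lower)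
  have "\<exists>y\<in>Q. \<phi> y < \<mu> + inverse (real (Suc n))" for n
  proof -
    have "Inf (\<phi> ` Q) < \<mu> + inverse (real (Suc n))" unfolding \<mu>_def by simp
    then obtain w where "w \<in> \<phi> ` Q" "w < \<mu> + inverse (real (Suc n))"
      using cInf_lessD[of "\<phi> ` Q"] Q(1) by blast
    then show ?thesis by blast
  qed
  then have "\<forall>n. \<exists>y. y \<in> Q \<and> \<phi> y < \<mu> + inverse (real (Suc n))" by blast
  from choice[OF this] obtain ys where ys: "\<forall>n. ys n \<in> Q \<and> \<phi> (ys n) < \<mu> + inverse (real (Suc n))"
    by blast
  then have ysQ: "\<And>n. ys n \<in> Q" and ysl: "\<And>n. \<phi> (ys n) < \<mu> + inverse (real (Suc n))"
    by auto
  define \<rho> where "\<rho> = norm (g' v) + 1"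
  have rho: "\<rho> > 0" unfolding \<rho>_def by (rule add_nonneg_pos) simp_all
  have "filterlim (\<lambda>x. g x - \<rho> * norm (x - v)) at_top at_infinity"
    using h4 rho unfolding H4_def by blast
  then have "\<forall>\<^sub>F x in at_infinity. \<mu> + 2 + g v \<le> g x - \<rho> * norm (x - v)"
    unfolding filterlim_at_top by blast
  then obtain R where R: "\<And>x. R \<le> norm x \<Longrightarrow> \<mu> + 2 + g v \<le> g x - \<rho> * norm (x - v)"
    unfolding eventually_at_infinity by blast
  have big: "\<mu> + 1 < \<phi> x" if "R \<le> norm x" for x
  proof -
    have "\<bar>blinfun_apply (g' v) (x - v)\<bar> \<le> norm (g' v) * norm (x - v)"
      using norm_blinfun[of "g' v" "x - v"] by simp
    moreover have "norm (g' v) * norm (x - v) \<le> \<rho> * norm (x - v)"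
      unfolding \<rho>_def by (simp add: mult_right_mono)
    ultimately show ?thesis using R[OF that] unfolding \<phi>_def bregman_def by linarith
  qed
  have ysR: "norm (ys n) < R" for n
  proof (rule ccontr)
    assume "\<not> norm (ys n) < R"
    then have "\<mu> + 1 < \<phi> (ys n)" using big by simp
    moreover have "inverse (real (Suc n)) \<le> 1" by (simp add: inverse_le_1_iff)
    ultimately show False using ysl[of n] by linarith
  qed
  define A where "A = cball (0::'e) R"
  have bA: "bounded A" unfolding A_def by simp
  have cau: "Cauchy ys"
  proof (rule CauchyI)
    fix \<epsilon> :: real assume ep: "0 < \<epsilon>"
    obtain c where c: "c > 0" "\<And>m y. m \<in> A \<Longrightarrow> \<epsilon>/2 \<le> norm (y - m) \<Longrightarrow> c \<le> bregman g g' y m"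
      using H2_ge[OF sc gd h2 bA, of "\<epsilon>/2"] ep by auto
    obtain M where M: "inverse (real (Suc M)) < c" using reals_Archimedean[OF c(1)] by blast
    have "norm (ys m - ys n) < \<epsilon>" if mn: "m \<ge> M" "n \<ge> M" for m n
    proof (rule ccontr)
      assume "\<not> norm (ys m - ys n) < \<epsilon>"
      then have ge: "\<epsilon> \<le> norm (ys m - ys n)" by simp
      define md where "md = (1/2) *\<^sub>R (ys m + ys n)"
      have "(1/2) *\<^sub>R ys m + (1/2) *\<^sub>R ys n \<in> Q"
        using Q(3) ysQ[of m] ysQ[of n] unfolding convex_def by simp
      then have mdQ: "md \<in> Q" unfolding md_def by (simp add: scaleR_add_right)
      have mdA: "md \<in> A" unfolding A_def md_def
      proof -
        have "norm ((1/2) *\<^sub>R (ys m + ys n)) \<le> (1/2) * (norm (ys m) + norm (ys n))"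
          using norm_triangle_ineq[of "ys m" "ys n"] by simp
        then show "(1/2) *\<^sub>R (ys m + ys n) \<in> cball 0 R" using ysR[of m] ysR[of n] by simp
      qed
      have e1: "ys m - md = (1/2) *\<^sub>R (ys m - ys n)" unfolding md_def by (simp add: algebra_simps halfhalf)
      have e2: "ys n - md = (-1/2) *\<^sub>R (ys m - ys n)" unfolding md_def by (simp add: algebra_simps halfhalf)
      have n1: "\<epsilon>/2 \<le> norm (ys m - md)" using ge unfolding e1 by simp
      have n2: "\<epsilon>/2 \<le> norm (ys n - md)" using ge unfolding e2 by simp
      have "c \<le> bregman g g' (ys m) md" by (rule c(2)[OF mdA n1])
      moreover have "c \<le> bregman g g' (ys n) md" by (rule c(2)[OF mdA n2])
      moreover have "\<phi> (ys m) + \<phi> (ys n) - 2 * \<phi> md = bregman g g' (ys m) md + bregman g g' (ys n) md"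
        unfolding \<phi>_def md_def by (rule breg_mid)
      moreover have "\<mu> \<le> \<phi> md" by (rule muQ[OF mdQ])
      moreover have "inverse (real (Suc m)) \<le> inverse (real (Suc M))" using mn by (simp add: le_imp_inverse_le)
      moreover have "inverse (real (Suc n)) \<le> inverse (real (Suc M))" using mn by (simp add: le_imp_inverse_le)
      ultimately show False using ysl[of m] ysl[of n] M by linarith
    qed
    then show "\<exists>M. \<forall>m\<ge>M. \<forall>n\<ge>M. norm (ys m - ys n) < \<epsilon>" by blast
  qed
  then obtain ystar where lim: "ys \<longlonglongrightarrow> ystar" using Cauchy_convergent_iff convergent_def by blast
  have ysQ': "ystar \<in> Q" using closed_sequentially[OF Q(2)] ysQ lim by blast
  have "\<phi> ystar \<le> \<mu>"
  proof (rule field_le_epsilon)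
    fix e :: real assume e0: "0 < e"
    define e3 where "e3 = e / 3"
    have e3: "0 < e3" using e0 e3_def by simp
    have "\<forall>\<^sub>F y in at ystar. g ystar - e3 < g y" using ls e3 unfolding lsc_def by blast
    then obtain d where d: "d > 0" "\<And>y. y \<noteq> ystar \<Longrightarrow> dist y ystar < d \<Longrightarrow> g ystar - e3 < g y"
      unfolding eventually_at by auto
    define r where "r = min d (e3 / (norm (g' v) + 1))"
    have np0: "0 < norm (g' v) + 1" by (rule add_nonneg_pos) simp_all
    have r: "r > 0" using d e3 r_def np0 by simp
    obtain N1 where N1: "\<And>n. n \<ge> N1 \<Longrightarrow> dist (ys n) ystar < r" using lim r unfolding lim_sequentially by blast
    obtain N2 where N2: "inverse (real (Suc N2)) < e3" using reals_Archimedean[OF e3] by blast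
    define n where "n = max N1 N2"
    have dn: "dist (ys n) ystar < r" using N1 n_def by simp
    have gl: "g ystar - e3 < g (ys n)"
      using d(2)[of "ys n"] dn r_def e3 by (cases "ys n = ystar") auto
    have "\<bar>blinfun_apply (g' v) (ys n - ystar)\<bar> \<le> norm (g' v) * norm (ys n - ystar)"
      using norm_blinfun[of "g' v" "ys n - ystar"] by simp
    also have "\<dots> \<le> (norm (g' v) + 1) * r"
      using dn by (intro mult_mono) (auto simp: dist_norm)
    also have "\<dots> \<le> e3"
    proof -
      have np: "0 < norm (g' v) + 1" by (rule add_nonneg_pos) simp_all
      have "r \<le> e3 / (norm (g' v) + 1)" unfolding r_def by simp
      then show ?thesis using np by (simp add: pos_le_divide_eq mult.commute)
    qed
    finally have lin: "\<bar>blinfun_apply (g' v) (ys n - ystar)\<bar> \<le> e3" .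
    have "blinfun_apply (g' v) (ys n - v) - blinfun_apply (g' v) (ystar - v) = blinfun_apply (g' v) (ys n - ystar)"
      by (simp add: blinfun.diff_right)
    moreover have "inverse (real (Suc n)) \<le> inverse (real (Suc N2))" using n_def by (simp add: le_imp_inverse_le)
    ultimately show "\<phi> ystar \<le> \<mu> + e" using ysl[of n] gl lin N2 e3_def unfolding \<phi>_def bregman_def by linarith
  qed
  then have "\<forall>u\<in>Q. \<phi> ystar \<le> \<phi> u" using muQ by (meson order_trans)
  then have minz: "ystar \<in> Q \<and> (\<forall>u\<in>Q. bregman g g' ystar v \<le> bregman g g' u v)"
    using ysQ' unfolding \<phi>_def by blast
  have uniq: "a = ystar" if a: "a \<in> Q \<and> (\<forall>u\<in>Q. bregman g g' a v \<le> bregman g g' u v)" for a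
  proof (rule ccontr)
    assume ne: "a \<noteq> ystar"
    define md where "md = (1/2) *\<^sub>R (a + ystar)"
    have "(1/2) *\<^sub>R a + (1/2) *\<^sub>R ystar \<in> Q"
      using Q(3) a ysQ' unfolding convex_def by simp
    then have mdQ: "md \<in> Q" unfolding md_def by (simp add: scaleR_add_right)
    have "a \<noteq> md"
    proof
      assume "a = md"
      then have "2 *\<^sub>R a = 2 *\<^sub>R md" by simp
      also have "\<dots> = a + ystar" unfolding md_def by simp
      finally have "a + a = a + ystar" by (simp add: scaleR_2)
      then show False using ne by simp
    qed
    then have p1: "0 < bregman g g' a md" by (rule breg_pos[OF sc gd, of md a, OF not_sym])
    have p2: "0 \<le> bregman g g' ystar md" by (rule breg_nonneg[OF sc gd])
    have "\<phi> a + \<phi> ystar - 2 * \<phi> md = bregman g g' a md + bregman g g' ystar md"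
      unfolding \<phi>_def md_def by (rule breg_mid)
    moreover have "\<phi> a \<le> \<phi> md" "\<phi> ystar \<le> \<phi> md" using a minz mdQ unfolding \<phi>_def by auto
    ultimately show False using p1 p2 by linarith
  qed
  have "\<exists>!y. y \<in> Q \<and> (\<forall>u\<in>Q. bregman g g' y v \<le> bregman g g' u v)"
    using minz uniq by blast
  from theI'[OF this] show ?thesis unfolding bproj_def by blast
qed

lemma cone_add:
  assumes "convex C" "cone C" "a \<in> C" "b \<in> C"
  shows "a + b \<in> C"
proof -
  have "(1/2) *\<^sub>R a + (1 - 1/2) *\<^sub>R b \<in> C" using assms(1,3,4) unfolding convex_def by simp
  then have "2 *\<^sub>R ((1/2) *\<^sub>R a + (1 - 1/2) *\<^sub>R b) \<in> C" using assms(2) unfolding cone_def by simp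
  then show ?thesis by (simp add: algebra_simps)
qed

lemma cone_scale:
  assumes "cone C" "a \<in> C" "0 \<le> s"
  shows "s *\<^sub>R a \<in> C"
  using assms unfolding cone_def by blast

lemma int_add:
  fixes C :: "'a::real_normed_vector set"
  assumes "convex C" "cone C" "p \<in> interior C" "c \<in> C"
  shows "p + c \<in> interior C"
proof -
  obtain r where r: "r > 0" "ball p r \<subseteq> C" using assms(3) mem_interior by blast
  have "ball (p + c) r \<subseteq> C"
  proof
    fix q assume "q \<in> ball (p + c) r"
    then have "q - c \<in> ball p r" by (simp add: dist_norm algebra_simps)
    then have "q - c \<in> C" using r by blast
    from cone_add[OF assms(1,2) this assms(4)] show "q \<in> C" by simp
  qed
  then show ?thesis using r(1) mem_interior by blast
qed

lemma int_scale:
  fixes C :: "'a::real_normed_vector set"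
  assumes "cone C" "p \<in> interior C" "0 < s"
  shows "s *\<^sub>R p \<in> interior C"
proof -
  obtain r where r: "r > 0" "ball p r \<subseteq> C" using assms(2) mem_interior by blast
  have "ball (s *\<^sub>R p) (s * r) \<subseteq> C"
  proof
    fix q assume "q \<in> ball (s *\<^sub>R p) (s * r)"
    then have "norm (s *\<^sub>R p - q) < s * r" by (simp add: dist_norm)
    moreover have "s *\<^sub>R p - q = s *\<^sub>R (p - (1/s) *\<^sub>R q)" using assms(3) by (simp add: algebra_simps)
    ultimately have "s * norm (p - (1/s) *\<^sub>R q) < s * r" using assms(3) by simp
    then have "norm (p - (1/s) *\<^sub>R q) < r" using assms(3) by simp
    then have "(1/s) *\<^sub>R q \<in> C" using r by (auto simp: dist_norm)
    from cone_scale[OF assms(1) this, of s] show "q \<in> C" using assms(3) by simp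
  qed
  moreover have "0 < s * r" using r(1) assms(3) by simp
  ultimately show ?thesis using mem_interior by blast
qed

theorem proposition3p6:
  fixes f :: "'e::banach \<Rightarrow> 'e \<Rightarrow> 'y::banach"
    and K :: "'e set" and C :: "'y set" and T :: "'e \<Rightarrow> 'e set"
    and g :: "'e \<Rightarrow> real" and g' :: "'e \<Rightarrow> ('e \<Rightarrow>\<^sub>L real)"
    and \<delta> \<theta> \<beta> \<beta>_lo \<beta>_hi :: real and e :: 'y and v x z :: 'e
  assumes K: "K \<noteq> {}" "closed K" "convex K"
    and C: "closed C" "convex C" "cone C" "\<forall>y. y \<in> C \<and> - y \<in> C \<longrightarrow> y = 0" "interior C \<noteq> {}"
    and T: "\<forall>u\<in>K. T u \<subseteq> K"
    and g: "in_F g g'" "H1 g g'" "H2 g g'" "H3 g g'" "H4 g"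
    and B: "B1 f" "B2 f" "B3 C f" "B4 g g' K T"
    and par: "0 < \<delta>" "\<delta> < 1" "0 < \<theta>" "\<theta> < 1" "0 < \<beta>_lo" "\<beta>_lo \<le> \<beta>_hi"
      "\<beta>_lo \<le> \<beta>" "\<beta> \<le> \<beta>_hi" "e \<in> interior C"
    and v: "v \<in> K"
    and x: "x = bproj g g' (T v) v"
    and z: "z \<in> wargmin C (\<lambda>y. \<beta> *\<^sub>R f x y + g y *\<^sub>R e - blinfun_apply (g' x) y *\<^sub>R e) (T v)"
    and nostop: "z \<noteq> v"
  shows "(\<exists>l::nat. - \<beta> *\<^sub>R f (\<theta> ^ l *\<^sub>R z + (1 - \<theta> ^ l) *\<^sub>R x) x
                   + \<beta> *\<^sub>R f (\<theta> ^ l *\<^sub>R z + (1 - \<theta> ^ l) *\<^sub>R x) z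
                   + (\<delta> * bregman g g' z x) *\<^sub>R e \<notin> interior C)
       \<and> (x \<noteq> z \<longrightarrow>
           (let l = (LEAST l::nat. - \<beta> *\<^sub>R f (\<theta> ^ l *\<^sub>R z + (1 - \<theta> ^ l) *\<^sub>R x) x
                   + \<beta> *\<^sub>R f (\<theta> ^ l *\<^sub>R z + (1 - \<theta> ^ l) *\<^sub>R x) z
                   + (\<delta> * bregman g g' z x) *\<^sub>R e \<notin> interior C);
                \<alpha> = \<theta> ^ l;
                yk = \<alpha> *\<^sub>R z + (1 - \<alpha>) *\<^sub>R x
            in f yk x \<notin> uminus ` C))"
proof -
  have sc: "strictly_convex g" and ls: "lsc g" and gd: "gateaux_deriv g g'" using g(1) unfolding in_F_def by auto
  have Tv: "T v \<noteq> {}" "closed (T v)" "convex (T v)" using B(4) v unfolding B4_def by auto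
  have xT: "x \<in> T v" unfolding x by (rule bproj_in[OF sc gd ls g(3) g(5) Tv])
  define G where "G y = \<beta> *\<^sub>R f x y + g y *\<^sub>R e - blinfun_apply (g' x) y *\<^sub>R e" for y
  have zT: "z \<in> T v" and zmin: "\<And>y. y \<in> T v \<Longrightarrow> G z - G y \<notin> interior C"
    using z unfolding wargmin_def G_def by auto
  have f0: "\<And>a. f a a = 0" using B(1) unfolding B1_def by simp
  have nz: "0 \<notin> interior C" using zmin[OF zT] by simp
  define D where "D = bregman g g' z x"
  have Gy: "G y = \<beta> *\<^sub>R f x y + (g y - blinfun_apply (g' x) y) *\<^sub>R e" for y
    unfolding G_def by (simp add: scaleR_diff_left)
  have s1: "(g z - blinfun_apply (g' x) z) - (g x - blinfun_apply (g' x) x) = D"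
    unfolding D_def bregman_def by (simp add: blinfun.diff_right)
  have "G z - G x = \<beta> *\<^sub>R f x z + ((g z - blinfun_apply (g' x) z) *\<^sub>R e - (g x - blinfun_apply (g' x) x) *\<^sub>R e)"
    unfolding Gy using f0[of x] by simp
  then have GzGx: "G z - G x = \<beta> *\<^sub>R f x z + D *\<^sub>R e"
    by (simp only: scaleR_diff_left[symmetric] s1)
  have Gnot: "\<beta> *\<^sub>R f x z + D *\<^sub>R e \<notin> interior C" using zmin[OF xT] GzGx by simp
  define yl where "yl l = \<theta> ^ l *\<^sub>R z + (1 - \<theta> ^ l) *\<^sub>R x" for l :: nat
  define Ael where "Ael l = - \<beta> *\<^sub>R f (yl l) x + \<beta> *\<^sub>R f (yl l) z + (\<delta> * D) *\<^sub>R e" for l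
  have Dpos: "x \<noteq> z \<Longrightarrow> 0 < D" unfolding D_def by (rule breg_pos[OF sc gd])
  have part1: "\<exists>l. Ael l \<notin> interior C"
  proof (cases "x = z")
    case True
    then have "Ael 0 = 0" unfolding Ael_def yl_def D_def by (simp add: breg_self)
    then show ?thesis using nz by metis
  next
    case False
    show ?thesis
    proof (rule ccontr)
      assume "\<not> (\<exists>l. Ael l \<notin> interior C)"
      then have allin: "\<And>l. Ael l \<in> interior C" by blast
      have ylim: "yl \<longlonglongrightarrow> x"
      proof -
        have "(\<lambda>l. \<theta> ^ l) \<longlonglongrightarrow> 0" using par by (intro LIMSEQ_power_zero) simp
        then have "(\<lambda>l. \<theta> ^ l *\<^sub>R z + (1 - \<theta> ^ l) *\<^sub>R x) \<longlonglongrightarrow> 0 *\<^sub>R z + (1 - 0) *\<^sub>R x"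
          by (intro tendsto_add tendsto_scaleR tendsto_diff tendsto_const)
        then show ?thesis unfolding yl_def by simp
      qed
      define S where "S = closed_segment x z \<times> {x, z}"
      have bS: "bounded S" unfolding S_def by (intro bounded_Times compact_imp_bounded) auto
      have cS: "continuous_on S (\<lambda>(a, b). f a b)"
        using B(2) bS unfolding B2_def by (blast intro: uniformly_continuous_imp_continuous)
      have ylS: "yl l \<in> closed_segment x z" for l
      proof -
        have "0 \<le> \<theta> ^ l" "\<theta> ^ l \<le> 1" using par by (auto intro: power_le_one)
        then show ?thesis unfolding yl_def closed_segment_def
          by (intro CollectI exI[of _ "\<theta> ^ l"]) (simp add: algebra_simps)
      qed
      have lim1: "(\<lambda>l. f (yl l) x) \<longlonglongrightarrow> f x x"
      proof -
        have "(x, x) \<in> S" unfolding S_def by simp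
        moreover have "\<forall>\<^sub>F l in sequentially. (yl l, x) \<in> S" using ylS unfolding S_def by simp
        ultimately have "(\<lambda>l. (\<lambda>(a, b). f a b) (yl l, x)) \<longlonglongrightarrow> (\<lambda>(a, b). f a b) (x, x)"
          using continuous_on_tendsto_compose[OF cS tendsto_Pair[OF ylim tendsto_const[of x]]] by blast
        then show ?thesis by simp
      qed
      have lim2: "(\<lambda>l. f (yl l) z) \<longlonglongrightarrow> f x z"
      proof -
        have "(x, z) \<in> S" unfolding S_def by simp
        moreover have "\<forall>\<^sub>F l in sequentially. (yl l, z) \<in> S" using ylS unfolding S_def by simp
        ultimately have "(\<lambda>l. (\<lambda>(a, b). f a b) (yl l, z)) \<longlonglongrightarrow> (\<lambda>(a, b). f a b) (x, z)"
          using continuous_on_tendsto_compose[OF cS tendsto_Pair[OF ylim tendsto_const[of z]]] by blast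
        then show ?thesis by simp
      qed
      have "Ael \<longlonglongrightarrow> - \<beta> *\<^sub>R f x x + \<beta> *\<^sub>R f x z + (\<delta> * D) *\<^sub>R e"
        unfolding Ael_def by (intro tendsto_intros lim1 lim2)
      then have limA: "Ael \<longlonglongrightarrow> \<beta> *\<^sub>R f x z + (\<delta> * D) *\<^sub>R e" using f0[of x] by simp
      have AC: "\<beta> *\<^sub>R f x z + (\<delta> * D) *\<^sub>R e \<in> C"
      proof (rule Lim_in_closed_set[OF C(1) _ _ limA])
        show "\<forall>\<^sub>F l in sequentially. Ael l \<in> C"
          by (intro always_eventually allI) (rule subsetD[OF interior_subset allin])
      qed simp
      have "((1 - \<delta>) * D) *\<^sub>R e \<in> interior C"
        using int_scale[OF C(3) par(9)] par Dpos[OF False] by simp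
      from int_add[OF C(2,3) this AC]
      have "\<beta> *\<^sub>R f x z + (\<delta> * D) *\<^sub>R e + ((1 - \<delta>) * D) *\<^sub>R e \<in> interior C"
        by (simp add: add.commute)
      moreover have "\<beta> *\<^sub>R f x z + (\<delta> * D) *\<^sub>R e + ((1 - \<delta>) * D) *\<^sub>R e = \<beta> *\<^sub>R f x z + D *\<^sub>R e"
        by (simp add: algebra_simps)
      ultimately have "\<beta> *\<^sub>R f x z + D *\<^sub>R e \<in> interior C" by simp
      then show False using Gnot by simp
    qed
  qed
  have part2: "f (yl l) x \<notin> uminus ` C" if xz: "x \<noteq> z" and notin: "Ael l \<notin> interior C" for l
  proof
    assume "f (yl l) x \<in> uminus ` C"
    then obtain c where c: "c \<in> C" "f (yl l) x = - c" by blast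
    define \<alpha> where "\<alpha> = \<theta> ^ l"
    have al: "0 < \<alpha>" "\<alpha> \<le> 1" using par unfolding \<alpha>_def by (auto intro: power_le_one)
    have "\<alpha> *\<^sub>R f (yl l) z + (1 - \<alpha>) *\<^sub>R f (yl l) x - f (yl l) (\<alpha> *\<^sub>R z + (1 - \<alpha>) *\<^sub>R x) \<in> C"
      using B(3) al unfolding B3_def C_convex_def by auto
    then have h: "\<alpha> *\<^sub>R f (yl l) z - (1 - \<alpha>) *\<^sub>R c \<in> C"
      using c f0[of "yl l"] unfolding yl_def \<alpha>_def by simp
    have "(1 - \<alpha>) *\<^sub>R c \<in> C" using cone_scale[OF C(3) c(1)] al by simp
    from cone_add[OF C(2,3) h this] have "\<alpha> *\<^sub>R f (yl l) z \<in> C" by simp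
    from cone_scale[OF C(3) this, of "1/\<alpha>"] have fz: "f (yl l) z \<in> C" using al by simp
    have "(\<delta> * D) *\<^sub>R e \<in> interior C"
      using int_scale[OF C(3) par(9)] par Dpos[OF xz] by simp
    moreover have "\<beta> *\<^sub>R c + \<beta> *\<^sub>R f (yl l) z \<in> C"
      using cone_add[OF C(2,3) cone_scale[OF C(3) c(1)] cone_scale[OF C(3) fz]] par by simp
    ultimately have "(\<delta> * D) *\<^sub>R e + (\<beta> *\<^sub>R c + \<beta> *\<^sub>R f (yl l) z) \<in> interior C"
      by (rule int_add[OF C(2,3)])
    moreover have "Ael l = (\<delta> * D) *\<^sub>R e + (\<beta> *\<^sub>R c + \<beta> *\<^sub>R f (yl l) z)"
      unfolding Ael_def using c by (simp add: algebra_simps)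
    ultimately show False using notin by simp
  qed
  define Lm where "Lm = (LEAST l. Ael l \<notin> interior C)"
  have LmP: "Ael Lm \<notin> interior C" unfolding Lm_def by (rule LeastI_ex[OF part1])
  show ?thesis
  proof
    show "\<exists>l. - \<beta> *\<^sub>R f (\<theta> ^ l *\<^sub>R z + (1 - \<theta> ^ l) *\<^sub>R x) x
                   + \<beta> *\<^sub>R f (\<theta> ^ l *\<^sub>R z + (1 - \<theta> ^ l) *\<^sub>R x) z
                   + (\<delta> * bregman g g' z x) *\<^sub>R e \<notin> interior C"
      using part1 unfolding Ael_def yl_def D_def .
  next
    show "x \<noteq> z \<longrightarrow>
           (let l = (LEAST l::nat. - \<beta> *\<^sub>R f (\<theta> ^ l *\<^sub>R z + (1 - \<theta> ^ l) *\<^sub>R x) x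
                   + \<beta> *\<^sub>R f (\<theta> ^ l *\<^sub>R z + (1 - \<theta> ^ l) *\<^sub>R x) z
                   + (\<delta> * bregman g g' z x) *\<^sub>R e \<notin> interior C);
                \<alpha> = \<theta> ^ l;
                yk = \<alpha> *\<^sub>R z + (1 - \<alpha>) *\<^sub>R x
            in f yk x \<notin> uminus ` C)"
    proof
      assume xz: "x \<noteq> z"
      have "f (yl Lm) x \<notin> uminus ` C" by (rule part2[OF xz LmP])
      then show "let l = (LEAST l::nat. - \<beta> *\<^sub>R f (\<theta> ^ l *\<^sub>R z + (1 - \<theta> ^ l) *\<^sub>R x) x
                   + \<beta> *\<^sub>R f (\<theta> ^ l *\<^sub>R z + (1 - \<theta> ^ l) *\<^sub>R x) z
                   + (\<delta> * bregman g g' z x) *\<^sub>R e \<notin> interior C);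
                \<alpha> = \<theta> ^ l;
                yk = \<alpha> *\<^sub>R z + (1 - \<alpha>) *\<^sub>R x
            in f yk x \<notin> uminus ` C"
        unfolding Let_def Lm_def yl_def Ael_def D_def .
    qed
  qed
qed

end
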